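(* Let $\Gamma\subseteq\mathit{Aff}(2,\mathbb{H})$ be an abelian subgroup acting freely on $\mathbb{H}^2$. Then $\Gamma$ is conjugate in $\mathit{Aff}(2,\mathbb{H})$ either to a subgroup of the group of all matrices $\begin{pmatrix} 1&0&r\\ 0&d&0\\ 0&0&1\end{pmatrix}$ with $r,d\in\mathbb{H}$, $d\neq0$, or to a subgroup of the group of all matrices $\begin{pmatrix} 1&b&r\\ 0&1&s\\ 0&0&1\end{pmatrix}$ with $b,r,s\in\mathbb{H}$.
   Context: $\mathit{Aff}(2,\mathbb{H})$ is identified with invertible $3\times3$ quaternionic matrices $\begin{pmatrix} a&b&r\\ c&d&s\\ 0&0&1\end{pmatrix}$ acting on $(x,y)\in\mathbb{H}^2$ by $(x,y)\mapsto(ax+by+r,cx+dy+s)$. *)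

theory Defs
  imports "HOL-Analysis.Analysis"
begin

datatype quat = Quat (Re: real) (Im1: real) (Im2: real) (Im3: real)

lemma quat_eqI [intro?]:
  "Re x = Re y \<Longrightarrow> Im1 x = Im1 y \<Longrightarrow> Im2 x = Im2 y \<Longrightarrow> Im3 x = Im3 y \<Longrightarrow> x = y"
  by (cases x, cases y) simp

instantiation quat :: ring_1
begin
definition "0 = Quat 0 0 0 0"
definition "1 = Quat 1 0 0 0"
definition "x + y = Quat (Re x + Re y) (Im1 x + Im1 y) (Im2 x + Im2 y) (Im3 x + Im3 y)"
definition "x - y = Quat (Re x - Re y) (Im1 x - Im1 y) (Im2 x - Im2 y) (Im3 x - Im3 y)"
definition "- x = Quat (- Re x) (- Im1 x) (- Im2 x) (- Im3 x)"
definition "x * y = Quat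
   (Re x * Re y - Im1 x * Im1 y - Im2 x * Im2 y - Im3 x * Im3 y)
   (Re x * Im1 y + Im1 x * Re y + Im2 x * Im3 y - Im3 x * Im2 y)
   (Re x * Im2 y - Im1 x * Im3 y + Im2 x * Re y + Im3 x * Im1 y)
   (Re x * Im3 y + Im1 x * Im2 y - Im2 x * Im1 y + Im3 x * Re y)"
instance
  by standard (auto intro!: quat_eqI simp: zero_quat_def one_quat_def plus_quat_def
      minus_quat_def uminus_quat_def times_quat_def algebra_simps)
end

text \<open>An element of Aff(2,H) is the matrix ((a,b,r),(c,d,s),(0,0,1)) with quaternion
  entries, invertible as a 3x3 quaternionic matrix. We record the six entries.\<close>

record aff =
  ma :: quat  mb :: quat  mr :: quat
  mc :: quat  md :: quat  ms :: quat

text \<open>Matrix product of the 3x3 matrices ((a,b,r),(c,d,s),(0,0,1)).\<close>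
definition aff_mul :: "aff \<Rightarrow> aff \<Rightarrow> aff" where
  "aff_mul g h =
    \<lparr> ma = ma g * ma h + mb g * mc h, mb = ma g * mb h + mb g * md h,
      mr = ma g * mr h + mb g * ms h + mr g,
      mc = mc g * ma h + md g * mc h, md = mc g * mb h + md g * md h,
      ms = mc g * mr h + md g * ms h + ms g \<rparr>"

definition aff_id :: aff where
  "aff_id = \<lparr> ma = 1, mb = 0, mr = 0, mc = 0, md = 1, ms = 0 \<rparr>"

definition Aff2H :: "aff set" where
  "Aff2H = {g. \<exists>h. aff_mul g h = aff_id \<and> aff_mul h g = aff_id}"

definition aff_apply :: "aff \<Rightarrow> quat \<times> quat \<Rightarrow> quat \<times> quat" where
  "aff_apply g p = (ma g * fst p + mb g * snd p + mr g, mc g * fst p + md g * snd p + ms g)"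

definition is_subgroup_Aff :: "aff set \<Rightarrow> bool" where
  "is_subgroup_Aff G \<longleftrightarrow> G \<subseteq> Aff2H \<and> aff_id \<in> G \<and>
     (\<forall>g\<in>G. \<forall>h\<in>G. aff_mul g h \<in> G) \<and>
     (\<forall>g\<in>G. \<exists>h\<in>G. aff_mul g h = aff_id \<and> aff_mul h g = aff_id)"

definition is_abelian :: "aff set \<Rightarrow> bool" where
  "is_abelian G \<longleftrightarrow> (\<forall>g\<in>G. \<forall>h\<in>G. aff_mul g h = aff_mul h g)"

definition acts_freely :: "aff set \<Rightarrow> bool" where
  "acts_freely G \<longleftrightarrow> (\<forall>g\<in>G. \<forall>p. aff_apply g p = p \<longrightarrow> g = aff_id)"

text \<open>Conjugation: C g C^{-1}, with Ci the inverse of C.\<close>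
definition conj_set :: "aff \<Rightarrow> aff \<Rightarrow> aff set \<Rightarrow> aff set" where
  "conj_set C Ci G = (\<lambda>g. aff_mul (aff_mul C g) Ci) ` G"

definition TypeI :: "aff set" where
  "TypeI = {\<lparr> ma = 1, mb = 0, mr = r, mc = 0, md = d, ms = 0 \<rparr> | r d. d \<noteq> 0}"

definition TypeII :: "aff set" where
  "TypeII = {\<lparr> ma = 1, mb = b, mr = r, mc = 0, md = 1, ms = s \<rparr> | b r s. True}"

end

theory Submission
  imports Defs
begin

definition qn :: "quat \<Rightarrow> real" where
 "qn q = Re q ^ 2 + Im1 q ^ 2 + Im2 q ^ 2 + Im3 q ^ 2"
definition qinv :: "quat \<Rightarrow> quat" where
 "qinv q = Quat (Re q / qn q) (- Im1 q / qn q) (- Im2 q / qn q) (- Im3 q / qn q)"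
lemma qn_nz: "q \<noteq> 0 \<Longrightarrow> qn q \<noteq> 0"
proof
  assume "q \<noteq> 0" "qn q = 0"
  hence "Re q = 0 \<and> Im1 q = 0 \<and> Im2 q = 0 \<and> Im3 q = 0" unfolding qn_def
    by (smt (verit) zero_le_power2 power2_eq_square mult_eq_0_iff)
  thus False using \<open>q \<noteq> 0\<close> by (cases q) (simp add: zero_quat_def)
qed
lemma qinv_r [simp]: "q \<noteq> 0 \<Longrightarrow> q * qinv q = 1"
proof -
  assume "q \<noteq> 0"
  hence n: "qn q \<noteq> 0" by (rule qn_nz)
  obtain a b c d where q: "q = Quat a b c d" by (cases q)
  have n': "a*a+b*b+c*c+d*d \<noteq> 0" using n by (simp add: q qn_def power2_eq_square)
  have e1: "a * (a / N) - b * (- b / N) - c * (- c / N) - d * (- d / N) = (a*a+b*b+c*c+d*d)/N" for N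
    by (simp add: diff_divide_distrib add_divide_distrib)
  show ?thesis using n'
    apply (simp add: q times_quat_def qinv_def one_quat_def qn_def power2_eq_square e1 algebra_simps)
    by (simp add: add_divide_distrib[symmetric])
qed
lemma qinv_l [simp]: "q \<noteq> 0 \<Longrightarrow> qinv q * q = 1"
proof -
  assume "q \<noteq> 0"
  hence n: "qn q \<noteq> 0" by (rule qn_nz)
  obtain a b c d where q: "q = Quat a b c d" by (cases q)
  have n': "a*a+b*b+c*c+d*d \<noteq> 0" using n by (simp add: q qn_def power2_eq_square)
  have e1: "a / N * a - (- b / N) * b - (- c / N) * c - (- d / N) * d = (a*a+b*b+c*c+d*d)/N" for N
    by (simp add: diff_divide_distrib add_divide_distrib)
  show ?thesis using n'
    apply (simp add: q times_quat_def qinv_def one_quat_def qn_def power2_eq_square e1 algebra_simps)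
    by (simp add: add_divide_distrib[symmetric])
qed

lemma qc1 [simp]: "x \<noteq> 0 \<Longrightarrow> qinv x * (x * y) = y"
  by (simp add: mult.assoc[symmetric])
lemma qc2 [simp]: "x \<noteq> 0 \<Longrightarrow> x * (qinv x * y) = y"
  by (simp add: mult.assoc[symmetric])
lemma qc3 [simp]: "x \<noteq> 0 \<Longrightarrow> y * x * qinv x = y"
  by (simp add: mult.assoc)
lemma qc4 [simp]: "x \<noteq> 0 \<Longrightarrow> y * qinv x * x = y"
  by (simp add: mult.assoc)
lemma nozd: "(x::quat) * y = 0 \<Longrightarrow> x = 0 \<or> y = 0"
  by (metis qc1 mult_zero_right)
lemma one_ne_zero_q: "(1::quat) \<noteq> 0"
  by (simp add: one_quat_def zero_quat_def)

lemma aff_mul_assoc: "aff_mul (aff_mul f g) h = aff_mul f (aff_mul g h)"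
  by (simp add: aff_mul_def algebra_simps)
lemma aff_mul_id [simp]: "aff_mul aff_id g = g" "aff_mul g aff_id = g"
  by (simp_all add: aff_mul_def aff_id_def)
lemma aff_apply_mul: "aff_apply (aff_mul g h) p = aff_apply g (aff_apply h p)"
  by (simp add: aff_mul_def aff_apply_def algebra_simps)
lemma aff_apply_id [simp]: "aff_apply aff_id p = p"
  by (simp add: aff_apply_def aff_id_def)

definition pr :: "aff \<Rightarrow> aff \<Rightarrow> bool" where
  "pr C Ci \<longleftrightarrow> aff_mul C Ci = aff_id \<and> aff_mul Ci C = aff_id"
definition cj :: "aff \<Rightarrow> aff \<Rightarrow> aff \<Rightarrow> aff" where
  "cj C Ci g = aff_mul (aff_mul C g) Ci"
definition free1 :: "aff \<Rightarrow> bool" where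
  "free1 g \<longleftrightarrow> (\<forall>p. aff_apply g p = p \<longrightarrow> g = aff_id)"
definition linid :: "aff \<Rightarrow> bool" where
  "linid g \<longleftrightarrow> ma g = 1 \<and> mb g = 0 \<and> mc g = 0 \<and> md g = 1"
definition inv1 :: "aff \<Rightarrow> bool" where
  "inv1 g \<longleftrightarrow> (\<exists>h. aff_mul g h = aff_id \<and> aff_mul h g = aff_id)"

lemma pr_comp: "pr C1 Ci1 \<Longrightarrow> pr C2 Ci2 \<Longrightarrow> pr (aff_mul C2 C1) (aff_mul Ci1 Ci2)"
  unfolding pr_def by (metis aff_mul_assoc aff_mul_id)
lemma cj_comp: "cj C2 Ci2 (cj C1 Ci1 g) = cj (aff_mul C2 C1) (aff_mul Ci1 Ci2) g"
  unfolding cj_def by (simp add: aff_mul_assoc)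
lemma cj_back: "pr C Ci \<Longrightarrow> cj Ci C (cj C Ci g) = g"
  unfolding cj_def pr_def by (metis aff_mul_assoc aff_mul_id)

lemma free_cj: assumes "pr C Ci" "free1 g" shows "free1 (cj C Ci g)"
  unfolding free1_def
proof (intro allI impI)
  fix p assume a: "aff_apply (cj C Ci g) p = p"
  have "aff_apply g (aff_apply Ci p) = aff_apply (aff_mul (aff_mul Ci C) g) (aff_apply Ci p)"
    using assms(1) by (simp add: pr_def)
  also have "\<dots> = aff_apply Ci (aff_apply (cj C Ci g) p)"
    by (simp add: cj_def aff_apply_mul)
  also have "\<dots> = aff_apply Ci p" using a by simp
  finally have "g = aff_id" using assms(2) unfolding free1_def by blast
  thus "cj C Ci g = aff_id" using assms(1) by (simp add: cj_def pr_def)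
qed

lemma inv_cj: assumes "pr C Ci" "inv1 g" shows "inv1 (cj C Ci g)"
proof -
  obtain h where h: "aff_mul g h = aff_id" "aff_mul h g = aff_id" using assms(2) inv1_def by blast
  have "aff_mul (cj C Ci g) (cj C Ci h) = aff_id" "aff_mul (cj C Ci h) (cj C Ci g) = aff_id"
    using assms(1) h by (simp_all add: cj_def pr_def aff_mul_assoc, simp_all add: aff_mul_assoc[symmetric])
  thus ?thesis unfolding inv1_def by blast
qed

lemma comm_cj: assumes "pr C Ci" "aff_mul g h = aff_mul h g"
  shows "aff_mul (cj C Ci g) (cj C Ci h) = aff_mul (cj C Ci h) (cj C Ci g)"
proof -
  have "aff_mul (cj C Ci g) (cj C Ci h) = cj C Ci (aff_mul g h)"
    using assms(1) by (simp add: cj_def pr_def aff_mul_assoc, simp add: aff_mul_assoc[symmetric])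
  moreover have "aff_mul (cj C Ci h) (cj C Ci g) = cj C Ci (aff_mul h g)"
    using assms(1) by (simp add: cj_def pr_def aff_mul_assoc, simp add: aff_mul_assoc[symmetric])
  ultimately show ?thesis using assms(2) by simp
qed

lemma linid_mid: "linid h \<Longrightarrow> linid (aff_mul X Y) \<Longrightarrow> linid (aff_mul (aff_mul X h) Y)"
  unfolding linid_def by (simp add: aff_mul_def)

lemma linid_cj: assumes "pr C Ci" "linid (cj C Ci g)" shows "linid g"
proof -
  have "linid (cj Ci C (cj C Ci g))"
    unfolding cj_def[of Ci C] apply (rule linid_mid[OF assms(2)])
    using assms(1) by (simp add: pr_def linid_def aff_id_def)
  thus ?thesis using cj_back[OF assms(1)] by simp
qed

lemma aff_eta: "g = \<lparr> ma = ma g, mb = mb g, mr = mr g, mc = mc g, md = md g, ms = ms g \<rparr>"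
  by (cases g) simp


lemma FA: assumes g1: "ma g0 = 1" "mb g0 = 0" "mc g0 = 0" "md g0 \<noteq> 1" "ms g0 = 0"
  and g2: "free1 g0" and h: "aff_mul g0 h = aff_mul h g0" "inv1 h"
  shows "h \<in> TypeI"
proof -
  have r0: "mr g0 \<noteq> 0"
  proof
    assume "mr g0 = 0"
    hence "aff_apply g0 (0,0) = (0,0)" using g1 by (simp add: aff_apply_def)
    hence "g0 = aff_id" using g2 free1_def by blast
    thus False using g1(4) by (simp add: aff_id_def)
  qed
  have d1: "md g0 - 1 \<noteq> 0" using g1(4) by simp
  have "mb (aff_mul g0 h) = mb (aff_mul h g0)" using h(1) by simp
  hence "mb h * (md g0 - 1) = 0" using g1 by (simp add: aff_mul_def algebra_simps)
  hence b: "mb h = 0" using d1 nozd by blast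
  have "mc (aff_mul g0 h) = mc (aff_mul h g0)" using h(1) by simp
  hence "(md g0 - 1) * mc h = 0" using g1 by (simp add: aff_mul_def algebra_simps)
  hence c: "mc h = 0" using d1 nozd by blast
  have "mr (aff_mul g0 h) = mr (aff_mul h g0)" using h(1) by simp
  hence "(ma h - 1) * mr g0 = 0" using g1 by (simp add: aff_mul_def algebra_simps)
  hence a: "ma h = 1" using r0 nozd by fastforce
  have "ms (aff_mul g0 h) = ms (aff_mul h g0)" using h(1) by simp
  hence "(md g0 - 1) * ms h = 0" using g1 c by (simp add: aff_mul_def algebra_simps)
  hence s: "ms h = 0" using d1 nozd by blast
  obtain k where "aff_mul h k = aff_id" using h(2) inv1_def by blast
  hence "md (aff_mul h k) = 1" by (simp add: aff_id_def)
  hence d: "md h \<noteq> 0" using c one_ne_zero_q by (auto simp: aff_mul_def)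
  show ?thesis unfolding TypeI_def
    using a b c s d by (subst aff_eta) auto
qed

lemma aux1: "(a - 1) * x + y = 0 \<Longrightarrow> a * x + y = (x::quat)"
proof -
  assume h: "(a - 1) * x + y = 0"
  have "a * x + y = x + ((a - 1) * x + y)" by (simp add: algebra_simps)
  thus ?thesis using h by simp
qed

lemma fixpt: "(ma g - 1) * x + (mb g * y + mr g) = 0 \<Longrightarrow> (md g - 1) * y + (mc g * x + ms g) = 0
   \<Longrightarrow> aff_apply g (x, y) = (x, y)"
  apply (drule aux1)+
  by (simp add: aff_apply_def algebra_simps)

lemma FB: assumes g1: "ma g0 = 1" "mc g0 = 0" "md g0 = 1" "mb g0 \<noteq> 0"
  and h: "aff_mul g0 h = aff_mul h g0" "free1 h"
  shows "h \<in> TypeII"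
proof -
  define \<beta> where "\<beta> = mb g0"
  have "ma (aff_mul g0 h) = ma (aff_mul h g0)" using h(1) by simp
  hence "\<beta> * mc h = 0" using g1 by (simp add: aff_mul_def algebra_simps \<beta>_def)
  hence c: "mc h = 0" using g1(4) nozd \<beta>_def by blast
  have "mb (aff_mul g0 h) = mb (aff_mul h g0)" using h(1) by simp
  hence bd: "\<beta> * md h = ma h * \<beta>" using g1 by (simp add: aff_mul_def algebra_simps \<beta>_def)
  have a: "ma h = 1"
  proof (rule ccontr)
    assume a1: "ma h \<noteq> 1"
    hence a1': "ma h - 1 \<noteq> 0" by simp
    have d1: "md h - 1 \<noteq> 0"
    proof
      assume "md h - 1 = 0"
      hence "md h = 1" by simp
      hence "(ma h - 1) * \<beta> = 0" using bd by (simp add: algebra_simps)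
      thus False using a1' g1(4) nozd \<beta>_def by blast
    qed
    define y where "y = - (qinv (md h - 1) * ms h)"
    define x where "x = - (qinv (ma h - 1) * (mb h * y + mr h))"
    have "(ma h - 1) * x + (mb h * y + mr h) = 0" using a1' by (simp add: x_def)
    moreover have "(md h - 1) * y + (mc h * x + ms h) = 0" using d1 c by (simp add: y_def)
    ultimately have "aff_apply h (x, y) = (x, y)" by (rule fixpt)
    hence "h = aff_id" using h(2) free1_def by blast
    thus False using a1 by (simp add: aff_id_def)
  qed
  have "\<beta> * (md h - 1) = 0" using bd a by (simp add: algebra_simps)
  hence d: "md h = 1" using g1(4) nozd \<beta>_def by fastforce
  show ?thesis unfolding TypeII_def
    using a c d by (subst aff_eta) auto
qed

lemma kernel: assumes "free1 g" "\<not> linid g"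
  shows "\<exists>v1 v2. (v1 \<noteq> 0 \<or> v2 \<noteq> 0) \<and> (ma g - 1) * v1 + mb g * v2 = 0 \<and> mc g * v1 + (md g - 1) * v2 = 0"
proof -
  define p where "p = ma g - 1"
  define q where "q = mb g"
  define r where "r = mc g"
  define s where "s = md g - 1"
  define t1 where "t1 = mr g"
  define t2 where "t2 = ms g"
  have nofix: False if "p * x + (q * y + t1) = 0" "s * y + (r * x + t2) = 0" for x y
  proof -
    have "aff_apply g (x, y) = (x, y)" apply (rule fixpt)
      using that by (simp_all add: p_def q_def r_def s_def t1_def t2_def)
    hence "g = aff_id" using assms(1) free1_def by blast
    thus False using assms(2) by (simp add: aff_id_def linid_def)
  qed
  have "\<exists>v1 v2. (v1 \<noteq> 0 \<or> v2 \<noteq> 0) \<and> p * v1 + q * v2 = 0 \<and> r * v1 + s * v2 = 0"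
  proof (cases "p = 0")
    case False
    define \<delta> where "\<delta> = s - r * qinv p * q"
    show ?thesis
    proof (cases "\<delta> = 0")
      case True
      have "p * (- (qinv p * q)) + q * 1 = 0" using False by simp
      moreover have "r * (- (qinv p * q)) + s * 1 = 0" using True
        by (simp add: \<delta>_def mult.assoc)
      ultimately show ?thesis using one_ne_zero_q by blast
    next
      case dn: False
      define x2 where "x2 = qinv \<delta> * (r * qinv p * t1 - t2)"
      define x1 where "x1 = - (qinv p * (t1 + q * x2))"
      have e1: "p * x1 + (q * x2 + t1) = 0" using False by (simp add: x1_def)
      have e2: "\<delta> * x2 = r * qinv p * t1 - t2" using dn by (simp add: x2_def)
      have e3: "r * x1 = - (r * qinv p * t1) - r * qinv p * q * x2"
        by (simp add: x1_def algebra_simps mult.assoc)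
      have e4: "s * x2 = \<delta> * x2 + r * qinv p * q * x2" by (simp add: \<delta>_def algebra_simps)
      have "s * x2 + (r * x1 + t2) = 0" unfolding e3 e4 e2 by (simp add: algebra_simps)
      with e1 nofix show ?thesis by blast
    qed
  next
    case p0: True
    show ?thesis
    proof (cases "r = 0")
      case True
      have "p * 1 + q * 0 = 0" "r * 1 + s * 0 = 0" using p0 True by simp_all
      thus ?thesis using one_ne_zero_q by blast
    next
      case rn: False
      show ?thesis
      proof (cases "q = 0")
        case True
        have "p * (- (qinv r * s)) + q * 1 = 0" "r * (- (qinv r * s)) + s * 1 = 0"
          using p0 True rn by simp_all
        thus ?thesis using one_ne_zero_q by blast
      next
        case qn: False
        define x2 where "x2 = - (qinv q * t1)"
        define x1 where "x1 = - (qinv r * (s * x2 + t2))"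
        have "p * x1 + (q * x2 + t1) = 0" using p0 qn by (simp add: x2_def)
        moreover have "s * x2 + (r * x1 + t2) = 0" using rn by (simp add: x1_def)
        ultimately show ?thesis using nofix by blast
      qed
    qed
  qed
  thus ?thesis by (simp add: p_def q_def r_def s_def)
qed


lemma G: assumes "pr C Ci" "ma g * ma Ci + mb g * mc Ci = ma Ci" "mc g * ma Ci + md g * mc Ci = mc Ci"
  shows "ma (cj C Ci g) = 1 \<and> mc (cj C Ci g) = 0"
proof -
  have "ma (cj C Ci g) = ma C * (ma g * ma Ci + mb g * mc Ci) + mb C * (mc g * ma Ci + md g * mc Ci)"
    by (simp add: cj_def aff_mul_def algebra_simps)
  also have "\<dots> = ma (aff_mul C Ci)" using assms(2,3) by (simp add: aff_mul_def)
  finally have 1: "ma (cj C Ci g) = 1" using assms(1) by (simp add: pr_def aff_id_def)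
  have "mc (cj C Ci g) = mc C * (ma g * ma Ci + mb g * mc Ci) + md C * (mc g * ma Ci + md g * mc Ci)"
    by (simp add: cj_def aff_mul_def algebra_simps)
  also have "\<dots> = mc (aff_mul C Ci)" using assms(2,3) by (simp add: aff_mul_def)
  finally have 2: "mc (cj C Ci g) = 0" using assms(1) by (simp add: pr_def aff_id_def)
  show ?thesis using 1 2 by simp
qed

lemma S2: assumes "v1 \<noteq> 0 \<or> v2 \<noteq> 0" "(ma g - 1) * v1 + mb g * v2 = 0" "mc g * v1 + (md g - 1) * v2 = 0"
  shows "\<exists>C Ci. pr C Ci \<and> ma (cj C Ci g) = 1 \<and> mc (cj C Ci g) = 0"
proof -
  have e1: "ma g * v1 + mb g * v2 = v1" using assms(2) by (simp add: algebra_simps)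
  have e2: "mc g * v1 + md g * v2 = v2" using assms(3) by (simp add: algebra_simps)
  show ?thesis
  proof (cases "v1 = 0")
    case False
    define Ci where "Ci = \<lparr> ma = v1, mb = 0, mr = 0, mc = v2, md = 1, ms = 0 \<rparr>"
    define C where "C = \<lparr> ma = qinv v1, mb = 0, mr = 0, mc = - (v2 * qinv v1), md = 1, ms = 0 \<rparr>"
    have "pr C Ci" using False by (simp add: pr_def C_def Ci_def aff_mul_def aff_id_def)
    moreover have "ma (cj C Ci g) = 1 \<and> mc (cj C Ci g) = 0"
      by (rule G[OF \<open>pr C Ci\<close>]) (simp_all add: Ci_def e1 e2)
    ultimately show ?thesis by blast
  next
    case True
    hence v2: "v2 \<noteq> 0" using assms(1) by simp
    define Ci where "Ci = \<lparr> ma = 0, mb = 1, mr = 0, mc = v2, md = 0, ms = 0 \<rparr>"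
    define C where "C = \<lparr> ma = 0, mb = qinv v2, mr = 0, mc = 1, md = 0, ms = 0 \<rparr>"
    have "pr C Ci" using v2 by (simp add: pr_def C_def Ci_def aff_mul_def aff_id_def)
    moreover have "ma (cj C Ci g) = 1 \<and> mc (cj C Ci g) = 0"
      apply (rule G[OF \<open>pr C Ci\<close>]) using e1 e2 True by (simp_all add: Ci_def)
    ultimately show ?thesis by blast
  qed
qed

lemma S3a: assumes "ma g = 1" "mc g = 0" "md g \<noteq> 1"
  shows "\<exists>C Ci. pr C Ci \<and> ma (cj C Ci g) = 1 \<and> mb (cj C Ci g) = 0 \<and> mc (cj C Ci g) = 0 \<and> md (cj C Ci g) = md g"
proof -
  have dn: "md g - 1 \<noteq> 0" using assms(3) by simp
  define c where "c = - (mb g * qinv (md g - 1))"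
  have cc: "c * (md g - 1) = - mb g" using dn by (simp add: c_def)
  define C where "C = \<lparr> ma = 1, mb = c, mr = 0, mc = 0, md = 1, ms = 0 \<rparr>"
  define Ci where "Ci = \<lparr> ma = 1, mb = - c, mr = 0, mc = 0, md = 1, ms = 0 \<rparr>"
  have "pr C Ci" by (simp add: pr_def C_def Ci_def aff_mul_def aff_id_def)
  moreover have "mb (cj C Ci g) = mb g + c * (md g - 1)"
    using assms by (simp add: cj_def C_def Ci_def aff_mul_def algebra_simps)
  moreover have "ma (cj C Ci g) = 1 \<and> mc (cj C Ci g) = 0 \<and> md (cj C Ci g) = md g"
    using assms by (simp add: cj_def C_def Ci_def aff_mul_def algebra_simps)
  ultimately show ?thesis using cc by auto
qed

lemma S3b: assumes "ma g = 1" "mb g = 0" "mc g = 0" "md g \<noteq> 1"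
  shows "\<exists>C Ci. pr C Ci \<and> ma (cj C Ci g) = 1 \<and> mb (cj C Ci g) = 0 \<and> mc (cj C Ci g) = 0 \<and> md (cj C Ci g) = md g
     \<and> ms (cj C Ci g) = 0"
proof -
  have dn: "1 - md g \<noteq> 0" using assms(4) by simp
  define k where "k = - (qinv (1 - md g) * ms g)"
  have kk: "(1 - md g) * k = - ms g" using dn by (simp add: k_def)
  define C where "C = \<lparr> ma = 1, mb = 0, mr = 0, mc = 0, md = 1, ms = k \<rparr>"
  define Ci where "Ci = \<lparr> ma = 1, mb = 0, mr = 0, mc = 0, md = 1, ms = - k \<rparr>"
  have "pr C Ci" by (simp add: pr_def C_def Ci_def aff_mul_def aff_id_def)
  moreover have "ms (cj C Ci g) = ms g + (1 - md g) * k"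
    using assms by (simp add: cj_def C_def Ci_def aff_mul_def algebra_simps)
  moreover have "ma (cj C Ci g) = 1 \<and> mb (cj C Ci g) = 0 \<and> mc (cj C Ci g) = 0 \<and> md (cj C Ci g) = md g"
    using assms by (simp add: cj_def C_def Ci_def aff_mul_def algebra_simps)
  ultimately show ?thesis using kk by auto
qed

lemma chain: assumes "pr C1 Ci1" "pr C2 Ci2" "P (cj C2 Ci2 (cj C1 Ci1 g))"
  shows "\<exists>C Ci. pr C Ci \<and> P (cj C Ci g)"
  using assms pr_comp cj_comp by metis

lemma NF: assumes "free1 g" "\<not> linid g"
  shows "\<exists>C Ci. pr C Ci \<and> ((ma (cj C Ci g) = 1 \<and> mb (cj C Ci g) = 0 \<and> mc (cj C Ci g) = 0 \<and> md (cj C Ci g) \<noteq> 1 \<and> ms (cj C Ci g) = 0)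
     \<or> (ma (cj C Ci g) = 1 \<and> mc (cj C Ci g) = 0 \<and> md (cj C Ci g) = 1 \<and> mb (cj C Ci g) \<noteq> 0))"
proof -
  obtain v1 v2 where v: "v1 \<noteq> 0 \<or> v2 \<noteq> 0" "(ma g - 1) * v1 + mb g * v2 = 0" "mc g * v1 + (md g - 1) * v2 = 0"
    using kernel[OF assms] by blast
  obtain C1 Ci1 where c1: "pr C1 Ci1" "ma (cj C1 Ci1 g) = 1" "mc (cj C1 Ci1 g) = 0"
    using S2[OF v] by blast
  define g1 where "g1 = cj C1 Ci1 g"
  have f1: "free1 g1" using free_cj[OF c1(1) assms(1)] g1_def by simp
  have l1: "\<not> linid g1" using linid_cj[OF c1(1)] assms(2) g1_def by blast
  show ?thesis
  proof (cases "md g1 = 1")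
    case True
    hence "mb g1 \<noteq> 0" using l1 c1 g1_def by (simp add: linid_def)
    thus ?thesis using True c1 g1_def by blast
  next
    case False
    obtain C2 Ci2 where c2: "pr C2 Ci2" "ma (cj C2 Ci2 g1) = 1" "mb (cj C2 Ci2 g1) = 0"
      "mc (cj C2 Ci2 g1) = 0" "md (cj C2 Ci2 g1) = md g1"
      using S3a[of g1] c1 g1_def False by blast
    define g2 where "g2 = cj C2 Ci2 g1"
    obtain C3 Ci3 where c3: "pr C3 Ci3" "ma (cj C3 Ci3 g2) = 1" "mb (cj C3 Ci3 g2) = 0"
      "mc (cj C3 Ci3 g2) = 0" "md (cj C3 Ci3 g2) = md g1" "ms (cj C3 Ci3 g2) = 0"
      using S3b[of g2] c2 g2_def False by auto
    have "\<exists>C Ci. pr C Ci \<and> (\<lambda>x. ma x = 1 \<and> mb x = 0 \<and> mc x = 0 \<and> md x \<noteq> 1 \<and> ms x = 0) (cj C Ci g1)"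
      apply (rule chain[OF c2(1) c3(1)]) using c3 False g2_def by simp
    then obtain C4 Ci4 where c4: "pr C4 Ci4" "(\<lambda>x. ma x = 1 \<and> mb x = 0 \<and> mc x = 0 \<and> md x \<noteq> 1 \<and> ms x = 0) (cj C4 Ci4 g1)"
      by blast
    have "\<exists>C Ci. pr C Ci \<and> (\<lambda>x. ma x = 1 \<and> mb x = 0 \<and> mc x = 0 \<and> md x \<noteq> 1 \<and> ms x = 0) (cj C Ci g)"
      by (rule chain[OF c1(1) c4(1)]) (use c4(2) g1_def in simp)
    thus ?thesis by blast
  qed
qed

theorem mainTheorem11:
  fixes \<Gamma> :: "aff set"
  assumes "is_subgroup_Aff \<Gamma>" and "is_abelian \<Gamma>" and "acts_freely \<Gamma>"
  shows "\<exists>C\<in>Aff2H. \<exists>Ci. aff_mul C Ci = aff_id \<and> aff_mul Ci C = aff_id \<and>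
           (conj_set C Ci \<Gamma> \<subseteq> TypeI \<or> conj_set C Ci \<Gamma> \<subseteq> TypeII)"
proof -
  have fr: "free1 g" if "g \<in> \<Gamma>" for g using assms(3) that by (simp add: acts_freely_def free1_def)
  have iv: "inv1 g" if "g \<in> \<Gamma>" for g using assms(1) that by (auto simp: is_subgroup_Aff_def inv1_def)
  have cm: "aff_mul g h = aff_mul h g" if "g \<in> \<Gamma>" "h \<in> \<Gamma>" for g h
    using assms(2) that by (simp add: is_abelian_def)
  have cs: "conj_set C Ci \<Gamma> = cj C Ci ` \<Gamma>" for C Ci
    by (simp add: conj_set_def cj_def)
  have inA: "C \<in> Aff2H" if "pr C Ci" for C Ci using that by (auto simp: pr_def Aff2H_def)
  show ?thesis
  proof (cases "\<forall>g\<in>\<Gamma>. linid g")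
    case True
    have "pr aff_id aff_id" by (simp add: pr_def)
    moreover have "conj_set aff_id aff_id \<Gamma> \<subseteq> TypeII"
    proof
      fix x assume "x \<in> conj_set aff_id aff_id \<Gamma>"
      hence "x \<in> \<Gamma>" by (simp add: conj_set_def)
      hence "linid x" using True by blast
      thus "x \<in> TypeII" unfolding TypeII_def linid_def by (subst aff_eta) auto
    qed
    ultimately show ?thesis using inA pr_def by blast
  next
    case False
    then obtain g0 where g0: "g0 \<in> \<Gamma>" "\<not> linid g0" by blast
    obtain C Ci where c: "pr C Ci" and
      nf: "(ma (cj C Ci g0) = 1 \<and> mb (cj C Ci g0) = 0 \<and> mc (cj C Ci g0) = 0 \<and> md (cj C Ci g0) \<noteq> 1 \<and> ms (cj C Ci g0) = 0)
     \<or> (ma (cj C Ci g0) = 1 \<and> mc (cj C Ci g0) = 0 \<and> md (cj C Ci g0) = 1 \<and> mb (cj C Ci g0) \<noteq> 0)"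
      using NF[OF fr[OF g0(1)] g0(2)] by blast
    have "conj_set C Ci \<Gamma> \<subseteq> TypeI \<or> conj_set C Ci \<Gamma> \<subseteq> TypeII"
    proof (rule disjE[OF nf])
      assume A: "ma (cj C Ci g0) = 1 \<and> mb (cj C Ci g0) = 0 \<and> mc (cj C Ci g0) = 0 \<and> md (cj C Ci g0) \<noteq> 1 \<and> ms (cj C Ci g0) = 0"
      have "cj C Ci h \<in> TypeI" if "h \<in> \<Gamma>" for h
        using FA[of "cj C Ci g0" "cj C Ci h"] A free_cj[OF c fr[OF g0(1)]] comm_cj[OF c cm[OF g0(1) that]]
          inv_cj[OF c iv[OF that]] by blast
      thus ?thesis by (auto simp: cs)
    next
      assume B: "ma (cj C Ci g0) = 1 \<and> mc (cj C Ci g0) = 0 \<and> md (cj C Ci g0) = 1 \<and> mb (cj C Ci g0) \<noteq> 0"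
      have "cj C Ci h \<in> TypeII" if "h \<in> \<Gamma>" for h
        using FB[of "cj C Ci g0" "cj C Ci h"] B comm_cj[OF c cm[OF g0(1) that]]
          free_cj[OF c fr[OF that]] by blast
      thus ?thesis by (auto simp: cs)
    qed
    thus ?thesis using c inA pr_def by blast
  qed
qed

end
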